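(* The output $S=S^{(B)}$ of Algorithm 1 satisfies, for each $c\in C$, \[ \mathbb{E}[f_c(S)] \;\ge\; \left(1-\frac1e\right)\mathrm{OPT}. \]
   Context: Setup: $V$ is a finite nonempty ground set, $C$ is a finite nonempty set of "colors", $k=|C|$. For each $c\in C$, $f_c\colon 2^V\to\mathbb{R}_{\ge 0}$ is monotone and submodular. $B$ is a positive integer (the budget). $f(T\mid S)=f(S\cup T)-f(S)$ and $f(v\mid S)=f(\{v\}\mid S)$. $\mathrm{OPT}=\max_{S\subseteq V,\,|S|\le B}\min_{c\in C} f_c(S)$. $\Delta_V$ is the probability simplex over $V$. Algorithm 1 (assumes $\mathrm{OPT}$ known): set $S^{(0)}=\emptyset$; for $i=1,\dots,B$: choose any $x^{(i)}\in\Delta_V$ (the choice may depend arbitrarily on the history) such that $\sum_{v\in V}x^{(i)}_v f_c(v\mid S^{(i-1)})\ge \frac1B(\mathrm{OPT}-f_c(S^{(i-1)}))$ for all $c\in C$ (such $x^{(i)}$ always exists); sample $v^{(i)}\sim x^{(i)}$ using fresh randomness; set $S^{(i)}=S^{(i-1)}\cup\{v^{(i)}\}$. Output $S^{(B)}$. *)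

theory Defs
  imports "HOL-Probability.Probability"
begin

definition marg :: "('a set \<Rightarrow> real) \<Rightarrow> 'a \<Rightarrow> 'a set \<Rightarrow> real" where
  "marg g v S = g (S \<union> {v}) - g S"

definition monotone_on_sets :: "'a set \<Rightarrow> ('a set \<Rightarrow> real) \<Rightarrow> bool" where
  "monotone_on_sets V g \<longleftrightarrow> (\<forall>S T. S \<subseteq> T \<and> T \<subseteq> V \<longrightarrow> g S \<le> g T)"

definition submodular_on :: "'a set \<Rightarrow> ('a set \<Rightarrow> real) \<Rightarrow> bool" where
  "submodular_on V g \<longleftrightarrow>
     (\<forall>S T. S \<subseteq> V \<and> T \<subseteq> V \<longrightarrow> g (S \<union> T) + g (S \<inter> T) \<le> g S + g T)"

definition nonneg_on :: "'a set \<Rightarrow> ('a set \<Rightarrow> real) \<Rightarrow> bool" where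
  "nonneg_on V g \<longleftrightarrow> (\<forall>S. S \<subseteq> V \<longrightarrow> 0 \<le> g S)"

definition OPT :: "'a set \<Rightarrow> 'c set \<Rightarrow> ('c \<Rightarrow> 'a set \<Rightarrow> real) \<Rightarrow> nat \<Rightarrow> real" where
  "OPT V C f B = Max {Min ((\<lambda>c. f c S) ` C) | S. S \<subseteq> V \<and> card S \<le> B}"

text \<open>Algorithm 1 with an arbitrary (history-dependent) choice rule x:
  x maps the history (sequence of sampled elements v^(1),...,v^(i-1)) to a distribution
  on elements.  run x i is the distribution of the history after i rounds;
  S^(i) is the set of the history.\<close>
primrec alg_run :: "('a list \<Rightarrow> 'a pmf) \<Rightarrow> nat \<Rightarrow> 'a list pmf" where
  "alg_run x 0 = return_pmf []"
| "alg_run x (Suc i) = bind_pmf (alg_run x i) (\<lambda>h. map_pmf (\<lambda>v. h @ [v]) (x h))"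

end

theory Submission
  imports Defs
begin

lemma run_support:
  assumes "\<forall>i<B. \<forall>h\<in>set_pmf (alg_run x i). set_pmf (x h) \<subseteq> V"
  shows "i \<le> B \<Longrightarrow> set_pmf (alg_run x i) \<subseteq> {h. set h \<subseteq> V \<and> length h = i}"
proof (induction i)
  case 0
  then show ?case by simp
next
  case (Suc i)
  then have IH: "set_pmf (alg_run x i) \<subseteq> {h. set h \<subseteq> V \<and> length h = i}" by simp
  have "i < B" using Suc by simp
  show ?case
  proof
    fix h assume "h \<in> set_pmf (alg_run x (Suc i))"
    then obtain a v where a: "a \<in> set_pmf (alg_run x i)" "v \<in> set_pmf (x a)" "h = a @ [v]"
      by auto
    have "v \<in> V" using assms \<open>i < B\<close> a by blast
    then show "h \<in> {h. set h \<subseteq> V \<and> length h = Suc i}" using IH a by auto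
  qed
qed

lemma exp_bound:
  assumes "(B::nat) > 0"
  shows "(1 - 1 / real B) ^ B \<le> exp (-1)"
proof -
  have "0 \<le> 1 - 1 / real B" using assms by (simp add: field_simps)
  moreover have "1 - 1 / real B \<le> exp (- (1 / real B))"
    using exp_ge_add_one_self[of "- (1 / real B)"] by simp
  ultimately have "(1 - 1 / real B) ^ B \<le> exp (- (1 / real B)) ^ B"
    by (intro power_mono)
  also have "\<dots> = exp (- 1)"
    using assms by (simp add: exp_of_nat_mult[symmetric])
  finally show ?thesis .
qed

theorem lemma3:
  fixes V :: "'a set" and C :: "'c set" and f :: "'c \<Rightarrow> 'a set \<Rightarrow> real"
    and B :: nat and x :: "'a list \<Rightarrow> 'a pmf"
  assumes "finite V" "V \<noteq> {}" "finite C" "C \<noteq> {}" "B > 0"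
    and "\<forall>c\<in>C. monotone_on_sets V (f c) \<and> submodular_on V (f c) \<and> nonneg_on V (f c)"
    and valid: "\<forall>i<B. \<forall>h\<in>set_pmf (alg_run x i).
        set_pmf (x h) \<subseteq> V \<and>
        (\<forall>c\<in>C. (\<Sum>v\<in>V. pmf (x h) v * marg (f c) v (set h))
                 \<ge> (OPT V C f B - f c (set h)) / real B)"
  shows "\<forall>c\<in>C. measure_pmf.expectation (alg_run x B) (\<lambda>h. f c (set h))
                 \<ge> (1 - 1 / exp 1) * OPT V C f B"
proof
  fix c assume c: "c \<in> C"
  define Op where "Op = OPT V C f B"
  define g where "g i = measure_pmf.expectation (alg_run x i) (\<lambda>h. f c (set h))" for i
  have nn: "\<And>S. S \<subseteq> V \<Longrightarrow> 0 \<le> f c' S" if "c' \<in> C" for c'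
    using assms(6) that unfolding nonneg_on_def by blast
  have O0: "0 \<le> Op"
  proof -
    have fin: "finite {Min ((\<lambda>c. f c S) ` C) | S. S \<subseteq> V \<and> card S \<le> B}"
    proof -
      have "{Min ((\<lambda>c. f c S) ` C) | S. S \<subseteq> V \<and> card S \<le> B} \<subseteq> (\<lambda>S. Min ((\<lambda>c. f c S) ` C)) ` Pow V"
        by auto
      then show ?thesis using assms(1) finite_subset by blast
    qed
    have "Min ((\<lambda>c. f c {}) ` C) \<in> {Min ((\<lambda>c. f c S) ` C) | S. S \<subseteq> V \<and> card S \<le> B}"
      by auto
    hence "Min ((\<lambda>c. f c {}) ` C) \<le> Op" unfolding Op_def OPT_def using fin Max_ge by blast
    moreover have "0 \<le> Min ((\<lambda>c. f c {}) ` C)"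
      using assms(3,4) nn by (simp add: Min_ge_iff)
    ultimately show ?thesis by linarith
  qed
  have supp: "\<And>i. i \<le> B \<Longrightarrow> set_pmf (alg_run x i) \<subseteq> {h. set h \<subseteq> V \<and> length h = i}"
    using run_support[of B x V] valid by blast
  have finA: "\<And>i. i \<le> B \<Longrightarrow> finite (set_pmf (alg_run x i))"
    using supp finite_lists_length_eq[OF assms(1)] finite_subset by metis
  have gi: "g i = (\<Sum>a\<in>set_pmf (alg_run x i). f c (set a) * pmf (alg_run x i) a)" if "i \<le> B" for i
    unfolding g_def using finA[OF that] by (intro integral_measure_pmf_real) auto
  have step: "g (Suc i) \<ge> g i + (Op - g i) / real B" if "i < B" for i
  proof -
    let ?A = "set_pmf (alg_run x i)"
    have fA: "finite ?A" using finA that by simp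
    have xV: "\<And>h. h \<in> ?A \<Longrightarrow> set_pmf (x h) \<subseteq> V" using valid that by blast
    have inner: "measure_pmf.expectation (map_pmf (\<lambda>v. h @ [v]) (x h)) (\<lambda>h. f c (set h))
        = f c (set h) + (\<Sum>v\<in>V. pmf (x h) v * marg (f c) v (set h))" if h: "h \<in> ?A" for h
    proof -
      have "measure_pmf.expectation (map_pmf (\<lambda>v. h @ [v]) (x h)) (\<lambda>h. f c (set h))
          = measure_pmf.expectation (x h) (\<lambda>v. f c (set h \<union> {v}))"
        by (simp add: integral_map_pmf)
      also have "\<dots> = (\<Sum>v\<in>V. f c (set h \<union> {v}) * pmf (x h) v)"
        using xV[OF h] assms(1) by (intro integral_measure_pmf_real) auto
      also have "\<dots> = (\<Sum>v\<in>V. pmf (x h) v * (f c (set h) + marg (f c) v (set h)))"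
        by (simp add: marg_def mult.commute)
      also have "\<dots> = f c (set h) * (\<Sum>v\<in>V. pmf (x h) v) + (\<Sum>v\<in>V. pmf (x h) v * marg (f c) v (set h))"
        by (simp add: distrib_left sum.distrib sum_distrib_left mult.commute)
      also have "(\<Sum>v\<in>V. pmf (x h) v) = 1"
        using xV[OF h] assms(1) by (intro sum_pmf_eq_1) auto
      finally show ?thesis by simp
    qed
    have "g (Suc i) = (\<Sum>a\<in>?A. pmf (alg_run x i) a *\<^sub>R
            measure_pmf.expectation (map_pmf (\<lambda>v. a @ [v]) (x a)) (\<lambda>h. f c (set h)))"
    proof -
      have "\<And>a. a \<in> ?A \<Longrightarrow> finite (set_pmf (map_pmf (\<lambda>v. a @ [v]) (x a)))"
        using xV assms(1) by (metis finite_imageI finite_subset set_map_pmf)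
      then show ?thesis unfolding g_def alg_run.simps
        using fA by (intro pmf_expectation_bind) auto
    qed
    also have "\<dots> = (\<Sum>a\<in>?A. pmf (alg_run x i) a * (f c (set a) + (\<Sum>v\<in>V. pmf (x a) v * marg (f c) v (set a))))"
      using inner by simp
    also have "\<dots> \<ge> (\<Sum>a\<in>?A. pmf (alg_run x i) a * (f c (set a) + (Op - f c (set a)) / real B))"
      (is "_ \<ge> ?R")
    proof (intro sum_mono mult_left_mono)
      fix a assume "a \<in> ?A"
      then show "f c (set a) + (Op - f c (set a)) / real B \<le> f c (set a) + (\<Sum>v\<in>V. pmf (x a) v * marg (f c) v (set a))"
        using valid that c unfolding Op_def by auto
    qed simp
    moreover have "?R = g i * (1 - 1 / real B) + Op / real B * (\<Sum>a\<in>?A. pmf (alg_run x i) a)"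
    proof -
      have e: "\<And>a. pmf (alg_run x i) a * (f c (set a) + (Op - f c (set a)) / real B)
          = (f c (set a) * pmf (alg_run x i) a) * (1 - 1 / real B) + Op / real B * pmf (alg_run x i) a"
        by (simp add: algebra_simps diff_divide_distrib)
      show ?thesis
        unfolding e sum.distrib gi[OF less_imp_le[OF that]]
        by (simp add: sum_distrib_left sum_distrib_right)
    qed
    moreover have "(\<Sum>a\<in>?A. pmf (alg_run x i) a) = 1"
      using fA by (intro sum_pmf_eq_1) auto
    ultimately have "g i + (Op - g i) / real B \<le> g (Suc i)"
      by (simp add: algebra_simps diff_divide_distrib)
    then show ?thesis by simp
  qed
  have ind: "Op - g i \<le> (1 - 1 / real B) ^ i * (Op - g 0)" if "i \<le> B" for i
    using that
  proof (induction i)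
    case 0 then show ?case by simp
  next
    case (Suc i)
    then have IH: "Op - g i \<le> (1 - 1 / real B) ^ i * (Op - g 0)" by simp
    have s: "g (Suc i) \<ge> g i + (Op - g i) / real B" using step Suc by simp
    have q: "0 \<le> 1 - 1 / real B" using assms(5) by (simp add: field_simps)
    have "Op - g (Suc i) \<le> (1 - 1 / real B) * (Op - g i)"
      using s assms(5) by (simp add: field_simps)
    also have "\<dots> \<le> (1 - 1 / real B) * ((1 - 1 / real B) ^ i * (Op - g 0))"
      using IH q by (rule mult_left_mono)
    finally show ?case by simp
  qed
  have g0: "g 0 = f c {}" unfolding g_def by simp
  have f0: "0 \<le> f c {}" using nn[OF c] by simp
  have q: "0 \<le> 1 - 1 / real B" using assms(5) by (simp add: field_simps)
  have eb: "(1 - 1 / real B) ^ B \<le> 1 / exp 1" using exp_bound[OF assms(5)] by (simp add: exp_minus field_simps)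
  have "Op - g B \<le> (1 - 1 / real B) ^ B * (Op - f c {})" using ind[of B] g0 by simp
  also have "\<dots> \<le> (1 - 1 / real B) ^ B * Op"
    using f0 q by (intro mult_left_mono) auto
  also have "\<dots> \<le> (1 / exp 1) * Op" using eb O0 by (rule mult_right_mono)
  finally show "g B \<ge> (1 - 1 / exp 1) * OPT V C f B" unfolding Op_def[symmetric] by (simp add: algebra_simps)
qed

end
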